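(* Let $G$ be a connected graph with a pair of vertices of order $h$ and a marking $S$. Let $v,v'$ be two vertices of $G$ joined by exactly $e\geq 1$ edges, with weights $s$ and $s'$ where $s>s'$, and normalize the marking (by adding a constant vector) so that $s'=0$. Let $G'$ be the graph obtained from $G$ by thickening the edges between $v$ and $v'$. Then the number of spanning trees satisfies $|\Phi(G')|=s\,(es)^{s-1}\,|\Phi(G)|$.
   Context: Graphs are finite, connected, may have multiple edges, no loops. With $c_{ij}$ ($i\neq j$) the number of edges joining $v_i,v_j$, $c_{ii}=-\sum_{j\ne i}c_{ij}$ and $M(G)=(c_{ij})$, $\mathbb{Z}^n/\mathrm{Im}(M(G))\cong \mathbb{Z}\times\Phi(G)$ with $\Phi(G)$ finite, and $|\Phi(G)|$ equals the number of spanning trees of $G$. A pair $\{v_i,v_j\}$ has order $h>0$ if there is $S=(s_1,\dots,s_n)^t\in\mathbb{Z}^n$ with $M(G)S=h(e_i-e_j)$ and $\gcd(s_1-s_n,\dots,s_{n-1}-s_n)=1$; $S$ is a marking, $s_k$ the weight of $v_k$, and $S+\alpha(1,\dots,1)^t$ is also a marking. Thickening the $e$ edges between $v'$ (weight $s'$) and $v$ (weight $s>s'$): delete these edges, add new vertices $w_1,\dots,w_{s-s'-1}$, and with $w_0=v'$, $w_{s-s'}=v$, join $w_{k-1}$ and $w_k$ by $e(s-s')$ edges for $k=1,\dots,s-s'$. *)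

theory Defs
  imports Main
begin

text \<open>A finite multigraph on vertex set {0..<n} is given by its edge-multiplicity
  function c: c i j = number of edges joining vertices i and j.\<close>

definition multigraph :: "nat \<Rightarrow> (nat \<Rightarrow> nat \<Rightarrow> nat) \<Rightarrow> bool" where
  "multigraph n c \<longleftrightarrow> (\<forall>i j. c i j = c j i) \<and> (\<forall>i. c i i = 0)
     \<and> (\<forall>i j. (n \<le> i \<or> n \<le> j) \<longrightarrow> c i j = 0)"

definition connected_mg :: "nat \<Rightarrow> (nat \<Rightarrow> nat \<Rightarrow> nat) \<Rightarrow> bool" where
  "connected_mg n c \<longleftrightarrow> 0 < n \<and>
     (\<forall>i<n. \<forall>j<n. (i, j) \<in> {(a, b). a < n \<and> b < n \<and> 0 < c a b}\<^sup>*)"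

definition lap :: "nat \<Rightarrow> (nat \<Rightarrow> nat \<Rightarrow> nat) \<Rightarrow> nat \<Rightarrow> nat \<Rightarrow> int" where
  "lap n c i j = (if i = j then - (\<Sum>k\<in>{0..<n} - {i}. int (c i k)) else int (c i j))"

definition lap_apply :: "nat \<Rightarrow> (nat \<Rightarrow> nat \<Rightarrow> nat) \<Rightarrow> (nat \<Rightarrow> int) \<Rightarrow> nat \<Rightarrow> int" where
  "lap_apply n c S i = (\<Sum>j<n. lap n c i j * S j)"

text \<open>S is a marking for the pair {p,q} of order h:
  M(G) S = h (e_p - e_q) and gcd(s_1 - s_n, ..., s_{n-1} - s_n) = 1
  (0-based indices: vertices 0..n-1, the last one is n-1).\<close>

definition is_marking :: "nat \<Rightarrow> (nat \<Rightarrow> nat \<Rightarrow> nat) \<Rightarrow> nat \<Rightarrow> nat \<Rightarrow> int \<Rightarrow> (nat \<Rightarrow> int) \<Rightarrow> bool" where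
  "is_marking n c p q h S \<longleftrightarrow>
     (\<forall>k<n. lap_apply n c S k = h * ((if k = p then 1 else 0) - (if k = q then 1 else 0)))
     \<and> Gcd ((\<lambda>k. S k - S (n - 1)) ` {..<n - 1}) = 1"

definition pair_of_order :: "nat \<Rightarrow> (nat \<Rightarrow> nat \<Rightarrow> nat) \<Rightarrow> nat \<Rightarrow> nat \<Rightarrow> int \<Rightarrow> bool" where
  "pair_of_order n c p q h \<longleftrightarrow> p < n \<and> q < n \<and> p \<noteq> q \<and> 0 < h \<and>
     (\<exists>S. is_marking n c p q h S)"

text \<open>Number of spanning trees of a multigraph: sum over spanning trees T of the
  complete graph on {0..<n} of the product of edge multiplicities (a tree using a
  non-edge contributes 0; a tree using an edge of multiplicity m is counted m times,
  once for each choice of the parallel edge).\<close>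

definition edges_on :: "nat \<Rightarrow> nat set set" where
  "edges_on n = {{i, j} | i j. i < n \<and> j < n \<and> i \<noteq> j}"

definition is_spanning_tree :: "nat \<Rightarrow> nat set set \<Rightarrow> bool" where
  "is_spanning_tree n T \<longleftrightarrow> T \<subseteq> edges_on n \<and> card T = n - 1 \<and>
     (\<forall>i<n. \<forall>j<n. (i, j) \<in> {(a, b). {a, b} \<in> T}\<^sup>*)"

definition num_spanning_trees :: "nat \<Rightarrow> (nat \<Rightarrow> nat \<Rightarrow> nat) \<Rightarrow> nat" where
  "num_spanning_trees n c =
     (\<Sum>T\<in>{T. is_spanning_tree n T}. \<Prod>ed\<in>T. c (Min ed) (Max ed))"

text \<open>Thickening the e edges between v' (weight 0) and v (weight s \<ge> 1):
  new vertices w_k = n + k - 1 for k = 1..s-1, w_0 = v', w_s = v;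
  w_{k-1} and w_k are joined by e*s edges. The new graph has n + s - 1 vertices.\<close>

definition thick_vertex :: "nat \<Rightarrow> nat \<Rightarrow> nat \<Rightarrow> nat \<Rightarrow> nat \<Rightarrow> nat" where
  "thick_vertex n v v' s k = (if k = 0 then v' else if k = s then v else n + k - 1)"

definition thicken :: "nat \<Rightarrow> (nat \<Rightarrow> nat \<Rightarrow> nat) \<Rightarrow> nat \<Rightarrow> nat \<Rightarrow> nat \<Rightarrow> nat
    \<Rightarrow> (nat \<Rightarrow> nat \<Rightarrow> nat)" where
  "thicken n c v v' e s = (\<lambda>a b.
     if (\<exists>k\<in>{1..s}. {a, b} = {thick_vertex n v v' s (k - 1), thick_vertex n v v' s k})
     then e * s
     else if {a, b} = {v, v'} then 0
     else c a b)"

end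

theory Submission
  imports Defs
begin


definition edges_in :: "nat set \<Rightarrow> nat set set" where
  "edges_in V = {{i, j} | i j. i \<in> V \<and> j \<in> V \<and> i \<noteq> j}"

definition relT :: "nat set set \<Rightarrow> (nat \<times> nat) set" where
  "relT T = {(a, b). {a, b} \<in> T}"

definition conn :: "nat set \<Rightarrow> nat set set \<Rightarrow> bool" where
  "conn V T \<longleftrightarrow> (\<forall>i\<in>V. \<forall>j\<in>V. (i, j) \<in> (relT T)\<^sup>*)"

definition trees :: "nat set \<Rightarrow> nat set set set" where
  "trees V = {T. T \<subseteq> edges_in V \<and> card T = card V - 1 \<and> conn V T}"

definition Aw :: "nat set \<Rightarrow> (nat set \<Rightarrow> nat) \<Rightarrow> nat set \<Rightarrow> nat" where
  "Aw V w ed = (\<Sum>T\<in>{T\<in>trees V. ed \<notin> T}. prod w T)"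

definition Bw :: "nat set \<Rightarrow> (nat set \<Rightarrow> nat) \<Rightarrow> nat set \<Rightarrow> nat" where
  "Bw V w ed = (\<Sum>T\<in>{T\<in>trees V. ed \<in> T}. prod w (T - {ed}))"

definition tau :: "nat set \<Rightarrow> (nat set \<Rightarrow> nat) \<Rightarrow> nat" where
  "tau V w = (\<Sum>T\<in>trees V. prod w T)"

lemma edges_in_mem: "{a, b} \<in> edges_in V \<Longrightarrow> a \<in> V \<and> b \<in> V \<and> a \<noteq> b"
  by (auto simp: edges_in_def doubleton_eq_iff)

lemma edges_in_I: "a \<in> V \<Longrightarrow> b \<in> V \<Longrightarrow> a \<noteq> b \<Longrightarrow> {a, b} \<in> edges_in V"
  by (auto simp: edges_in_def)

lemma finite_edges_in: "finite V \<Longrightarrow> finite (edges_in V)"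
proof -
  assume "finite V"
  have "edges_in V \<subseteq> (\<lambda>(i, j). {i, j}) ` (V \<times> V)" by (auto simp: edges_in_def)
  moreover have "finite ((\<lambda>(i, j). {i, j}) ` (V \<times> V))" using \<open>finite V\<close> by simp
  ultimately show ?thesis by (rule finite_subset)
qed

lemma finite_trees: "finite V \<Longrightarrow> finite (trees V)"
proof -
  assume "finite V"
  have "trees V \<subseteq> Pow (edges_in V)" by (auto simp: trees_def)
  thus ?thesis using finite_edges_in[OF \<open>finite V\<close>] by (meson finite_Pow_iff finite_subset)
qed

lemma finite_tree: "finite V \<Longrightarrow> T \<in> trees V \<Longrightarrow> finite T"
  using finite_edges_in by (auto simp: trees_def intro: finite_subset)

lemma edge_in_V: "T \<subseteq> edges_in V \<Longrightarrow> {a, b} \<in> T \<Longrightarrow> a \<in> V \<and> b \<in> V \<and> a \<noteq> b"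
  using edges_in_mem by blast

lemma rel_map:
  assumes "(i, j) \<in> (relT T)\<^sup>*"
    and "\<And>a b. {a, b} \<in> T \<Longrightarrow> (f a, f b) \<in> R\<^sup>*"
  shows "(f i, f j) \<in> R\<^sup>*"
  using assms(1)
proof (induction rule: rtrancl_induct)
  case base then show ?case by simp
next
  case (step y z)
  then have "{y, z} \<in> T" by (simp add: relT_def)
  then have "(f y, f z) \<in> R\<^sup>*" by (rule assms(2))
  with step.IH show ?case by simp
qed

lemma relT_I: "{a, b} \<in> T \<Longrightarrow> (a, b) \<in> (relT T)\<^sup>*"
  by (auto simp: relT_def)

lemma relT_mono: "T \<subseteq> T' \<Longrightarrow> (a, b) \<in> (relT T)\<^sup>* \<Longrightarrow> (a, b) \<in> (relT T')\<^sup>*"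
proof -
  assume "T \<subseteq> T'" "(a, b) \<in> (relT T)\<^sup>*"
  moreover have "relT T \<subseteq> relT T'" using \<open>T \<subseteq> T'\<close> by (auto simp: relT_def)
  ultimately show ?thesis using rtrancl_mono by blast
qed

lemma conn_leaf:
  assumes "x \<notin> V" "y \<in> V" "T \<subseteq> edges_in V"
  shows "conn (insert x V) (insert {x, y} T) \<longleftrightarrow> conn V T"
proof
  assume H: "conn (insert x V) (insert {x, y} T)"
  let ?f = "\<lambda>a. if a = x then y else a"
  show "conn V T" unfolding conn_def
  proof (intro ballI)
    fix i j assume ij: "i \<in> V" "j \<in> V"
    then have "(i, j) \<in> (relT (insert {x, y} T))\<^sup>*" using H by (auto simp: conn_def)
    then have "(?f i, ?f j) \<in> (relT T)\<^sup>*"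
    proof (rule rel_map)
      fix a b assume ab: "{a, b} \<in> insert {x, y} T"
      show "(?f a, ?f b) \<in> (relT T)\<^sup>*"
      proof (cases "{a, b} = {x, y}")
        case True
        then show ?thesis by (auto simp: doubleton_eq_iff)
      next
        case False
        then have "{a, b} \<in> T" using ab by simp
        moreover then have "a \<in> V" "b \<in> V" using edge_in_V[OF assms(3)] by auto
        ultimately show ?thesis using assms(1) by (auto intro: relT_I)
      qed
    qed
    moreover have "i \<noteq> x" "j \<noteq> x" using ij assms(1) by auto
    ultimately show "(i, j) \<in> (relT T)\<^sup>*" by simp
  qed
next
  assume H: "conn V T"
  let ?R = "relT (insert {x, y} T)"
  have hV: "(i, j) \<in> ?R\<^sup>*" if "i \<in> V" "j \<in> V" for i j
    using H that relT_mono[of T "insert {x, y} T"] by (auto simp: conn_def)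
  have xy: "(x, y) \<in> ?R\<^sup>*" "(y, x) \<in> ?R\<^sup>*" by (auto intro!: relT_I simp: insert_commute)
  show "conn (insert x V) (insert {x, y} T)" unfolding conn_def
  proof (intro ballI)
    fix i j assume "i \<in> insert x V" "j \<in> insert x V"
    then show "(i, j) \<in> ?R\<^sup>*"
      using hV xy assms(2) by (auto intro: rtrancl_trans)
  qed
qed

lemma conn_through:
  assumes "x \<notin> V" "u \<in> V" "z \<in> V" "T0 \<subseteq> edges_in V"
  shows "conn (insert x V) (insert {u, x} (insert {x, z} T0)) \<longleftrightarrow> conn V (insert {u, z} T0)"
proof
  assume H: "conn (insert x V) (insert {u, x} (insert {x, z} T0))"
  let ?f = "\<lambda>a. if a = x then u else a"
  show "conn V (insert {u, z} T0)" unfolding conn_def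
  proof (intro ballI)
    fix i j assume ij: "i \<in> V" "j \<in> V"
    then have "(i, j) \<in> (relT (insert {u, x} (insert {x, z} T0)))\<^sup>*" using H by (auto simp: conn_def)
    then have "(?f i, ?f j) \<in> (relT (insert {u, z} T0))\<^sup>*"
    proof (rule rel_map)
      fix a b assume ab: "{a, b} \<in> insert {u, x} (insert {x, z} T0)"
      show "(?f a, ?f b) \<in> (relT (insert {u, z} T0))\<^sup>*"
      proof (cases "{a, b} = {u, x}")
        case True
        then show ?thesis using assms by (auto simp: doubleton_eq_iff)
      next
        case F1: False
        show ?thesis
        proof (cases "{a, b} = {x, z}")
          case True
          then show ?thesis using assms by (auto simp: doubleton_eq_iff intro!: relT_I)
        next
          case False
          then have "{a, b} \<in> T0" using ab F1 by simp
          moreover then have "a \<in> V" "b \<in> V" using edge_in_V[OF assms(4)] by auto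
          ultimately show ?thesis using assms(1) by (auto intro: relT_I)
        qed
      qed
    qed
    moreover have "i \<noteq> x" "j \<noteq> x" using ij assms(1) by auto
    ultimately show "(i, j) \<in> (relT (insert {u, z} T0))\<^sup>*" by simp
  qed
next
  assume H: "conn V (insert {u, z} T0)"
  let ?R = "relT (insert {u, x} (insert {x, z} T0))"
  have hV: "(i, j) \<in> ?R\<^sup>*" if "i \<in> V" "j \<in> V" for i j
  proof -
    have "(id i, id j) \<in> ?R\<^sup>*"
    proof (rule rel_map[of i j "insert {u, z} T0"])
      show "(i, j) \<in> (relT (insert {u, z} T0))\<^sup>*" using H that by (auto simp: conn_def)
    next
      fix a b assume ab: "{a, b} \<in> insert {u, z} T0"
      show "(id a, id b) \<in> ?R\<^sup>*"
      proof (cases "{a, b} = {u, z}")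
        case True
        have ux: "(u, x) \<in> ?R\<^sup>*" "(x, u) \<in> ?R\<^sup>*" "(x, z) \<in> ?R\<^sup>*" "(z, x) \<in> ?R\<^sup>*"
          by (auto intro!: relT_I simp: insert_commute)
        from True show ?thesis using ux by (auto simp: doubleton_eq_iff intro: rtrancl_trans)
      next
        case False
        then have "{a, b} \<in> T0" using ab by simp
        then show ?thesis by (auto intro!: relT_I)
      qed
    qed
    then show ?thesis by simp
  qed
  have xu: "(x, u) \<in> ?R\<^sup>*" "(u, x) \<in> ?R\<^sup>*" by (auto intro!: relT_I simp: insert_commute)
  show "conn (insert x V) (insert {u, x} (insert {x, z} T0))" unfolding conn_def
  proof (intro ballI)
    fix i j assume "i \<in> insert x V" "j \<in> insert x V"
    then show "(i, j) \<in> ?R\<^sup>*"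
      using hV xu assms(2) by (auto intro: rtrancl_trans)
  qed
qed

lemma tau_split:
  assumes "finite V"
  shows "tau V w = Aw V w ed + w ed * Bw V w ed"
proof -
  have fin: "finite (trees V)" using finite_trees[OF assms] .
  have "tau V w = (\<Sum>T\<in>{T\<in>trees V. ed \<notin> T}. prod w T) + (\<Sum>T\<in>{T\<in>trees V. ed \<in> T}. prod w T)"
    unfolding tau_def using fin
    by (subst sum.union_disjoint[symmetric]) (auto intro!: sum.cong)
  also have "(\<Sum>T\<in>{T\<in>trees V. ed \<in> T}. prod w T) = (\<Sum>T\<in>{T\<in>trees V. ed \<in> T}. w ed * prod w (T - {ed}))"
    by (rule sum.cong) (auto intro: prod.remove finite_tree[OF assms])
  finally show ?thesis by (simp add: Aw_def Bw_def sum_distrib_left)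
qed

lemma AB_cong:
  assumes "\<And>d. d \<in> edges_in V \<Longrightarrow> d \<noteq> ed \<Longrightarrow> w d = w2 d"
  shows "Aw V w ed = Aw V w2 ed" "Bw V w ed = Bw V w2 ed"
  unfolding Aw_def Bw_def
  by (auto intro!: sum.cong prod.cong simp: trees_def dest!: assms)



lemma edges_split:
  assumes "x \<notin> V" "T' \<subseteq> edges_in (insert x V)"
    and nz: "\<And>d. d \<in> T' - {{x, z}} \<Longrightarrow> w' d \<noteq> 0"
    and hx: "\<And>y. y \<noteq> u \<Longrightarrow> y \<noteq> z \<Longrightarrow> w' {x, y} = 0"
    and huz: "w' {u, z} = 0" "u \<noteq> x"
  shows "T' - {{u, x}, {x, z}} \<subseteq> edges_in V" "{u, z} \<notin> T'"
proof -
  show "T' - {{u, x}, {x, z}} \<subseteq> edges_in V"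
  proof
    fix d assume d: "d \<in> T' - {{u, x}, {x, z}}"
    then have "d \<in> edges_in (insert x V)" using assms(2) by blast
    then obtain a b where ab: "d = {a, b}" "a \<in> insert x V" "b \<in> insert x V" "a \<noteq> b"
      unfolding edges_in_def by blast
    have "w' d \<noteq> 0" using nz d by auto
    have "a \<noteq> x"
    proof
      assume "a = x"
      then have "b = u \<or> b = z" using hx \<open>w' d \<noteq> 0\<close> ab by auto
      then show False using d ab \<open>a = x\<close> by (auto simp: insert_commute)
    qed
    moreover have "b \<noteq> x"
    proof
      assume "b = x"
      then have "a = u \<or> a = z" using hx \<open>w' d \<noteq> 0\<close> ab by (auto simp: insert_commute)
      then show False using d ab \<open>b = x\<close> by (auto simp: insert_commute)
    qed
    ultimately show "d \<in> edges_in V" using ab by (auto intro: edges_in_I)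
  qed
  show "{u, z} \<notin> T'"
  proof
    assume "{u, z} \<in> T'"
    moreover have "{u, z} \<noteq> {x, z}" using huz(2) by (auto simp: doubleton_eq_iff)
    ultimately have "w' {u, z} \<noteq> 0" using nz by auto
    then show False using huz by simp
  qed
qed

lemma prod_nz: "finite T \<Longrightarrow> prod (w :: _ \<Rightarrow> nat) T \<noteq> 0 \<Longrightarrow> d \<in> T \<Longrightarrow> w d \<noteq> 0"
  by (simp add: prod_zero_iff)

lemma isolated:
  assumes "T' \<subseteq> edges_in V" "x \<notin> V" "(x, u) \<in> (relT T')\<^sup>*" "u \<noteq> x"
  shows False
proof -
  from assms(3,4) obtain b where "(x, b) \<in> relT T'"
    by (metis converse_rtranclE)
  then have "{x, b} \<in> T'" by (simp add: relT_def)
  then show False using edge_in_V[OF assms(1)] assms(2) by blast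
qed

lemma edges_in_mono: "edges_in V \<subseteq> edges_in (insert x V)"
  by (auto simp: edges_in_def)

lemma card_trees: "T \<in> trees V \<Longrightarrow> card T = card V - 1" by (simp add: trees_def)

lemma subdiv:
  assumes fin: "finite V" and uV: "u \<in> V" and zV: "z \<in> V" and uz: "u \<noteq> z" and xV: "x \<notin> V"
    and hw: "\<And>d. d \<in> edges_in V \<Longrightarrow> d \<noteq> {u, z} \<Longrightarrow> w' d = w d"
    and w0: "w' {u, z} = 0" and wa: "w' {u, x} = \<alpha>"
    and hx: "\<And>y. y \<noteq> u \<Longrightarrow> y \<noteq> z \<Longrightarrow> w' {x, y} = 0"
  shows "Aw (insert x V) w' {x, z} = \<alpha> * Aw V w {u, z}"
    and "Bw (insert x V) w' {x, z} = Aw V w {u, z} + \<alpha> * Bw V w {u, z}"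
proof -
  let ?V' = "insert x V"
  have finV': "finite ?V'" using fin by simp
  have cardV': "card ?V' = card V + 1" using fin xV by simp
  have cardV: "card V \<ge> 2"
  proof -
    have "{u, z} \<subseteq> V" using uV zV by auto
    then have "card {u, z} \<le> card V" using fin card_mono by blast
    then show ?thesis using uz by simp
  qed
  have ux: "u \<noteq> x" "z \<noteq> x" using uV zV xV by auto
  have ne1: "{u, x} \<noteq> {x, z}" using uz by (auto simp: doubleton_eq_iff)
  have noX: "{x, y} \<notin> T" "{y, x} \<notin> T" if "T \<subseteq> edges_in V" for T y
    using that edge_in_V xV by blast+
  have wT: "prod w' T = prod w T" if "T \<subseteq> edges_in V" "{u, z} \<notin> T" for T
    using that hw by (auto intro!: prod.cong)
  let ?Aset = "{T\<in>trees V. {u, z} \<notin> T}"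
  let ?Bset = "{T\<in>trees V. {u, z} \<in> T}"
  
  let ?A' = "{T\<in>trees ?V'. {x, z} \<notin> T}"
  let ?g = "\<lambda>T. insert {u, x} T"
  have inj_g: "inj_on ?g ?Aset"
  proof (rule inj_onI)
    fix T1 T2 assume "T1 \<in> ?Aset" "T2 \<in> ?Aset" "?g T1 = ?g T2"
    moreover then have "{u, x} \<notin> T1" "{u, x} \<notin> T2" using noX by (auto simp: trees_def)
    ultimately show "T1 = T2" by (metis insert_ident)
  qed
  have g_in: "?g T \<in> ?A'" if T: "T \<in> ?Aset" for T
  proof -
    have Te: "T \<subseteq> edges_in V" and Tc: "card T = card V - 1" and Tconn: "conn V T"
      using T by (auto simp: trees_def)
    have fT: "finite T" using finite_tree[OF fin] T by blast
    have "{u, x} \<notin> T" using noX[OF Te] by blast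
    then have c: "card (?g T) = card ?V' - 1" using fT Tc cardV' cardV by simp
    have e: "?g T \<subseteq> edges_in ?V'" using Te ux uV zV edges_in_mono[of V x]
      by (auto intro!: edges_in_I)
    have "conn ?V' (insert {x, u} T)" using conn_leaf[OF xV uV Te] Tconn by simp
    then have cn: "conn ?V' (?g T)" by (simp add: insert_commute)
    have "{x, z} \<notin> ?g T" using ne1 noX[OF Te] by auto
    then show ?thesis using c e cn by (simp add: trees_def)
  qed
  have g_zero: "prod w' T' = 0" if T': "T' \<in> ?A' - ?g ` ?Aset" for T'
  proof (rule ccontr)
    assume nz: "prod w' T' \<noteq> 0"
    have T'e: "T' \<subseteq> edges_in ?V'" and T'c: "card T' = card ?V' - 1" and T'conn: "conn ?V' T'"
      and xz: "{x, z} \<notin> T'" using T' by (auto simp: trees_def)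
    have fT': "finite T'" using finite_tree[OF finV'] T' by blast
    have nzd: "\<And>d. d \<in> T' - {{x, z}} \<Longrightarrow> w' d \<noteq> 0" using prod_nz[OF fT' nz] by blast
    note es = edges_split[OF xV T'e nzd hx w0 ux(1)]
    have uxT: "{u, x} \<in> T'"
    proof (rule ccontr)
      assume "{u, x} \<notin> T'"
      then have "T' \<subseteq> edges_in V" using es(1) xz by blast
      moreover have "(x, u) \<in> (relT T')\<^sup>*" using T'conn uV by (auto simp: conn_def)
      ultimately show False using isolated xV ux by blast
    qed
    define T0 where "T0 = T' - {{u, x}}"
    have T0e: "T0 \<subseteq> edges_in V" using es(1) xz by (auto simp: T0_def)
    have T'eq: "T' = ?g T0" using uxT by (auto simp: T0_def)
    have "card T0 = card V - 1" using T'c uxT fT' cardV' by (simp add: T0_def)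
    moreover have "conn V T0"
      using conn_leaf[OF xV uV T0e] T'conn T'eq by (simp add: insert_commute)
    moreover have "{u, z} \<notin> T0" using es(2) by (simp add: T0_def)
    ultimately have "T0 \<in> ?Aset" using T0e by (simp add: trees_def)
    then show False using T' T'eq by blast
  qed
  have subA: "?g ` ?Aset \<subseteq> ?A'" using g_in by blast
  have fA': "finite ?A'" using finite_trees[OF finV'] by simp
  have "Aw ?V' w' {x, z} = (\<Sum>T'\<in>?g ` ?Aset. prod w' T')"
    unfolding Aw_def
    by (rule sum.mono_neutral_right[OF fA' subA]) (use g_zero in blast)
  also have "\<dots> = (\<Sum>T\<in>?Aset. prod w' (?g T))" by (rule sum.reindex[OF inj_g, unfolded comp_def])
  also have "\<dots> = (\<Sum>T\<in>?Aset. \<alpha> * prod w T)"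
  proof (rule sum.cong)
    fix T assume T: "T \<in> ?Aset"
    have Te: "T \<subseteq> edges_in V" using T by (simp add: trees_def)
    have fT: "finite T" using finite_tree[OF fin] T by blast
    have "{u, x} \<notin> T" using noX[OF Te] by blast
    then show "prod w' (?g T) = \<alpha> * prod w T" using fT wa wT[OF Te] T by simp
  qed simp
  finally show "Aw ?V' w' {x, z} = \<alpha> * Aw V w {u, z}" by (simp add: Aw_def sum_distrib_left)
  
  let ?B' = "{T\<in>trees ?V'. {x, z} \<in> T}"
  let ?g1 = "\<lambda>T. insert {x, z} T"
  let ?g2 = "\<lambda>T. insert {u, x} (insert {x, z} (T - {{u, z}}))"
  have inj_g1: "inj_on ?g1 ?Aset"
  proof (rule inj_onI)
    fix T1 T2 assume "T1 \<in> ?Aset" "T2 \<in> ?Aset" "?g1 T1 = ?g1 T2"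
    moreover then have "{x, z} \<notin> T1" "{x, z} \<notin> T2" using noX by (auto simp: trees_def)
    ultimately show "T1 = T2" by (metis insert_ident)
  qed
  have g2_inv: "insert {u, z} (?g2 T - {{u, x}, {x, z}}) = T" if "T \<in> ?Bset" for T
  proof -
    have Te: "T \<subseteq> edges_in V" using that by (simp add: trees_def)
    then have "{u, x} \<notin> T" "{x, z} \<notin> T" using noX by blast+
    then have "insert {u, x} (insert {x, z} (T - {{u, z}})) - {{u, x}, {x, z}} = T - {{u, z}}" by blast
    moreover have "{u, z} \<in> T" using that by simp
    ultimately show ?thesis by blast
  qed
  have inj_g2: "inj_on ?g2 ?Bset"
  proof (rule inj_onI)
    fix T1 T2 assume h1: "T1 \<in> ?Bset" and h2: "T2 \<in> ?Bset" and eq: "?g2 T1 = ?g2 T2"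
    have "T1 = insert {u, z} (?g2 T1 - {{u, x}, {x, z}})" using g2_inv[OF h1] by (rule sym)
    also have "\<dots> = insert {u, z} (?g2 T2 - {{u, x}, {x, z}})" by (simp only: eq)
    also have "\<dots> = T2" using g2_inv[OF h2] .
    finally show "T1 = T2" .
  qed
  have g1_in: "?g1 T \<in> ?B'" if T: "T \<in> ?Aset" for T
  proof -
    have Te: "T \<subseteq> edges_in V" and Tc: "card T = card V - 1" and Tconn: "conn V T"
      using T by (auto simp: trees_def)
    have fT: "finite T" using finite_tree[OF fin] T by blast
    have "{x, z} \<notin> T" using noX[OF Te] by blast
    then have c: "card (?g1 T) = card ?V' - 1" using fT Tc cardV' cardV by simp
    have e: "?g1 T \<subseteq> edges_in ?V'" using Te ux uV zV edges_in_mono[of V x]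
      by (auto intro!: edges_in_I)
    have cn: "conn ?V' (?g1 T)" using conn_leaf[OF xV zV Te] Tconn by simp
    show ?thesis using c e cn by (simp add: trees_def)
  qed
  have g2_in: "?g2 T \<in> ?B'" if T: "T \<in> ?Bset" for T
  proof -
    have Te: "T \<subseteq> edges_in V" and Tc: "card T = card V - 1" and Tconn: "conn V T"
      and uzT: "{u, z} \<in> T" using T by (auto simp: trees_def)
    define T0 where "T0 = T - {{u, z}}"
    have T0e: "T0 \<subseteq> edges_in V" using Te by (auto simp: T0_def)
    have fT: "finite T" using finite_tree[OF fin] T by blast
    have c0: "card T0 = card V - 2" using Tc uzT fT by (simp add: T0_def)
    have "{x, z} \<notin> T0" "{u, x} \<notin> insert {x, z} T0" using noX[OF T0e] ne1 by auto
    moreover have fT0: "finite T0" using fT by (simp add: T0_def)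
    ultimately have c: "card (?g2 T) = card ?V' - 1" using fT0 c0 cardV' cardV by (simp add: T0_def[symmetric])
    have e: "?g2 T \<subseteq> edges_in ?V'" using T0e ux uV zV edges_in_mono[of V x]
      by (auto intro!: edges_in_I simp: T0_def)
    have "T = insert {u, z} T0" using uzT by (auto simp: T0_def)
    then have cn: "conn ?V' (?g2 T)" using conn_through[OF xV uV zV T0e] Tconn by (simp add: T0_def)
    show ?thesis using c e cn by (simp add: trees_def)
  qed
  have disj: "?g1 ` ?Aset \<inter> ?g2 ` ?Bset = {}"
  proof -
    have "{u, x} \<notin> ?g1 T" if "T \<in> ?Aset" for T
      using that noX ne1 by (auto simp: trees_def)
    note a = this
    have ff: "False" if "T' \<in> ?g1 ` ?Aset" "T' \<in> ?g2 ` ?Bset" for T'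
    proof -
      from that(1) obtain T1 where T1: "T1 \<in> ?Aset" "T' = ?g1 T1" by (rule imageE)
      from that(2) obtain T2 where T2: "T' = ?g2 T2" by (rule imageE)
      have "{u, x} \<in> T'" using T2 by simp
      then show False using a[OF T1(1)] T1(2) by simp
    qed
    show ?thesis
    proof (rule equals0I)
      fix T' assume "T' \<in> ?g1 ` ?Aset \<inter> ?g2 ` ?Bset"
      then have "T' \<in> ?g1 ` ?Aset" "T' \<in> ?g2 ` ?Bset" by (rule IntD1, rule IntD2)
      then show False by (rule ff)
    qed
  qed
  have g12_zero: "prod w' (T' - {{x, z}}) = 0" if T': "T' \<in> ?B' - (?g1 ` ?Aset \<union> ?g2 ` ?Bset)" for T'
  proof (rule ccontr)
    assume nz: "prod w' (T' - {{x, z}}) \<noteq> 0"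
    have T'e: "T' \<subseteq> edges_in ?V'" and T'c: "card T' = card ?V' - 1" and T'conn: "conn ?V' T'"
      and xz: "{x, z} \<in> T'" using T' by (auto simp: trees_def)
    have fT': "finite T'" using finite_tree[OF finV'] T' by blast
    have nzd: "\<And>d. d \<in> T' - {{x, z}} \<Longrightarrow> w' d \<noteq> 0" using prod_nz[OF _ nz] fT' by blast
    note es = edges_split[OF xV T'e nzd hx w0 ux(1)]
    show False
    proof (cases "{u, x} \<in> T'")
      case True
      define T0 where "T0 = T' - {{u, x}, {x, z}}"
      have T0e: "T0 \<subseteq> edges_in V" using es(1) by (simp add: T0_def)
      have T'eq: "T' = insert {u, x} (insert {x, z} T0)" using True xz by (auto simp: T0_def)
      define T where "T = insert {u, z} T0"
      have uzT0: "{u, z} \<notin> T0" using es(2) by (simp add: T0_def)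
      have T0eq: "T - {{u, z}} = T0" using uzT0 by (auto simp: T_def)
      have Te: "T \<subseteq> edges_in V" using T0e uV zV uz by (auto simp: T_def intro: edges_in_I)
      have fT0: "finite T0" using fT' by (simp add: T0_def)
      have "card T0 = card T' - 2" using True xz ne1 fT' by (simp add: T0_def card_Diff_subset)
      then have "card T = card V - 1" using T'c cardV' cardV uzT0 fT0 by (simp add: T_def)
      moreover have "conn V T" using conn_through[OF xV uV zV T0e] T'conn T'eq by (simp add: T_def)
      ultimately have "T \<in> ?Bset" using Te by (simp add: trees_def T_def)
      moreover have "?g2 T = T'" using T0eq T'eq by simp
      ultimately show False using T' by blast
    next
      case False
      define T0 where "T0 = T' - {{x, z}}"
      have T0e: "T0 \<subseteq> edges_in V" using es(1) False by (auto simp: T0_def)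
      have T'eq: "T' = insert {x, z} T0" using xz by (auto simp: T0_def)
      have "card T0 = card V - 1" using T'c xz fT' cardV' by (simp add: T0_def)
      moreover have "conn V T0" using conn_leaf[OF xV zV T0e] T'conn T'eq by simp
      moreover have "{u, z} \<notin> T0" using es(2) by (simp add: T0_def)
      ultimately have "T0 \<in> ?Aset" using T0e by (simp add: trees_def)
      then show False using T' T'eq by blast
    qed
  qed
  have fA: "finite ?Aset" "finite ?Bset" using finite_trees[OF fin] by auto
  have subB: "?g1 ` ?Aset \<union> ?g2 ` ?Bset \<subseteq> ?B'" using g1_in g2_in by blast
  have fB': "finite ?B'" using finite_trees[OF finV'] by simp
  have "Bw ?V' w' {x, z} = (\<Sum>T'\<in>?g1 ` ?Aset \<union> ?g2 ` ?Bset. prod w' (T' - {{x, z}}))"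
    unfolding Bw_def
    by (rule sum.mono_neutral_right[OF fB' subB]) (use g12_zero in blast)
  also have "\<dots> = (\<Sum>T'\<in>?g1 ` ?Aset. prod w' (T' - {{x, z}})) + (\<Sum>T'\<in>?g2 ` ?Bset. prod w' (T' - {{x, z}}))"
    by (rule sum.union_disjoint) (use fA disj in simp_all)
  also have "(\<Sum>T'\<in>?g1 ` ?Aset. prod w' (T' - {{x, z}})) = (\<Sum>T\<in>?Aset. prod w' (?g1 T - {{x, z}}))"
    by (rule sum.reindex[OF inj_g1, unfolded comp_def])
  also have "\<dots> = (\<Sum>T\<in>?Aset. prod w T)"
  proof (rule sum.cong)
    fix T assume T: "T \<in> ?Aset"
    have Te: "T \<subseteq> edges_in V" using T by (simp add: trees_def)
    have "{x, z} \<notin> T" using noX[OF Te] by blast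
    then have "?g1 T - {{x, z}} = T" by auto
    then show "prod w' (?g1 T - {{x, z}}) = prod w T" using wT[OF Te] T by simp
  qed simp
  also have "(\<Sum>T'\<in>?g2 ` ?Bset. prod w' (T' - {{x, z}})) = (\<Sum>T\<in>?Bset. prod w' (?g2 T - {{x, z}}))"
    by (rule sum.reindex[OF inj_g2, unfolded comp_def])
  also have "\<dots> = (\<Sum>T\<in>?Bset. \<alpha> * prod w (T - {{u, z}}))"
  proof (rule sum.cong)
    fix T assume T: "T \<in> ?Bset"
    have Te: "T \<subseteq> edges_in V" using T by (simp add: trees_def)
    have T0e: "T - {{u, z}} \<subseteq> edges_in V" using Te by auto
    have fT: "finite T" using finite_tree[OF fin] T by blast
    have "{x, z} \<notin> T" "{u, x} \<notin> T" using noX[OF Te] by blast+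
    then have "?g2 T - {{x, z}} = insert {u, x} (T - {{u, z}})" using ne1 by auto
    moreover have "{u, x} \<notin> T - {{u, z}}" using \<open>{u, x} \<notin> T\<close> by simp
    ultimately show "prod w' (?g2 T - {{x, z}}) = \<alpha> * prod w (T - {{u, z}})"
      using wT[OF T0e] fT wa by simp
  qed simp
  finally show "Bw ?V' w' {x, z} = Aw V w {u, z} + \<alpha> * Bw V w {u, z}"
    by (simp add: Aw_def Bw_def sum_distrib_left)
qed



definition Pth :: "nat \<Rightarrow> nat \<Rightarrow> nat \<Rightarrow> nat \<Rightarrow> nat set \<Rightarrow> bool" where
  "Pth n v v' k d \<longleftrightarrow> (\<exists>i\<in>{1..k}. d = {thick_vertex n v v' k (i - 1), thick_vertex n v v' k i})"

definition Wt :: "nat \<Rightarrow> (nat \<Rightarrow> nat \<Rightarrow> nat) \<Rightarrow> nat \<Rightarrow> nat \<Rightarrow> nat \<Rightarrow> nat \<Rightarrow> nat set \<Rightarrow> nat" where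
  "Wt n c v v' b k d = (if Pth n v v' k d then b else if d = {v, v'} then 0 else c (Min d) (Max d))"

lemma tv_same: "i \<le> m \<Longrightarrow> thick_vertex n v v' (Suc (Suc m)) i = thick_vertex n v v' (Suc m) i"
  by (simp add: thick_vertex_def)

lemma tv_eq_v: "v < n \<Longrightarrow> v \<noteq> v' \<Longrightarrow> thick_vertex n v v' k j = v \<longleftrightarrow> (j = k \<and> k \<noteq> 0)"
  by (auto simp: thick_vertex_def)

lemma tv_eq_x: "v < n \<Longrightarrow> v' < n \<Longrightarrow> j \<le> k \<Longrightarrow> thick_vertex n v v' k j = n + m \<longleftrightarrow> (j = Suc m \<and> j \<noteq> k)"
  by (auto simp: thick_vertex_def)

lemma tv_less: "v < n \<Longrightarrow> v' < n \<Longrightarrow> j \<le> Suc m \<Longrightarrow> thick_vertex n v v' (Suc m) j < n + m"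
  by (auto simp: thick_vertex_def)

lemma mg_zero: "multigraph n c \<Longrightarrow> n \<le> a \<or> n \<le> b \<Longrightarrow> c a b = 0"
  by (auto simp: multigraph_def)

lemma Min_Max_2: "Max {a, b :: nat} = max a b" "Min {a, b :: nat} = min a b"
  by (auto simp: max_def min_def)

context
  fixes n :: nat and c :: "nat \<Rightarrow> nat \<Rightarrow> nat" and v v' b :: nat
  assumes mg: "multigraph n c" and vn: "v < n" and v'n: "v' < n" and vv: "v \<noteq> v'"
begin

lemma Pth_step:
  assumes d: "d \<in> edges_in {0..<n + m}"
    and dne: "d \<noteq> {thick_vertex n v v' (Suc m) m, v}"
  shows "Pth n v v' (Suc (Suc m)) d \<longleftrightarrow> Pth n v v' (Suc m) d"
proof
  assume "Pth n v v' (Suc (Suc m)) d"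
  then obtain i where i: "i \<in> {1..Suc (Suc m)}"
    "d = {thick_vertex n v v' (Suc (Suc m)) (i - 1), thick_vertex n v v' (Suc (Suc m)) i}"
    by (auto simp: Pth_def)
  have "i \<le> m"
  proof (rule ccontr)
    assume "\<not> i \<le> m"
    then have "n + m \<in> d" using i by (auto simp: thick_vertex_def)
    then show False using d by (auto simp: edges_in_def)
  qed
  then show "Pth n v v' (Suc m) d" using i tv_same[of i m] tv_same[of "i - 1" m]
    unfolding Pth_def by (intro bexI[of _ i]) auto
next
  assume "Pth n v v' (Suc m) d"
  then obtain i where i: "i \<in> {1..Suc m}"
    "d = {thick_vertex n v v' (Suc m) (i - 1), thick_vertex n v v' (Suc m) i}"
    by (auto simp: Pth_def)
  have "i \<le> m"
  proof (rule ccontr)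
    assume "\<not> i \<le> m"
    then have "i = Suc m" using i by auto
    then have "d = {thick_vertex n v v' (Suc m) m, v}" using i by (simp add: thick_vertex_def)
    then show False using dne by simp
  qed
  then show "Pth n v v' (Suc (Suc m)) d" using i tv_same[of i m] tv_same[of "i - 1" m]
    unfolding Pth_def by (intro bexI[of _ i]) auto
qed

lemma W_hw:
  assumes d: "d \<in> edges_in {0..<n + m}"
    and dne: "d \<noteq> {thick_vertex n v v' (Suc m) m, v}"
  shows "Wt n c v v' b (Suc (Suc m)) d = Wt n c v v' b (Suc m) d"
  using Pth_step[OF d dne] by (simp add: Wt_def)

lemma W_w0: "Wt n c v v' b (Suc (Suc m)) {thick_vertex n v v' (Suc m) m, v} = 0"
proof -
  let ?u = "thick_vertex n v v' (Suc m) m"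
  have ul: "?u < n + m" using tv_less[OF vn v'n, of m m] by simp
  have "\<not> Pth n v v' (Suc (Suc m)) {?u, v}"
  proof
    assume "Pth n v v' (Suc (Suc m)) {?u, v}"
    then obtain i where i: "i \<in> {1..Suc (Suc m)}"
      "{?u, v} = {thick_vertex n v v' (Suc (Suc m)) (i - 1), thick_vertex n v v' (Suc (Suc m)) i}"
      by (auto simp: Pth_def)
    have "v \<in> {thick_vertex n v v' (Suc (Suc m)) (i - 1), thick_vertex n v v' (Suc (Suc m)) i}"
      using i(2) by blast
    then have "i = Suc (Suc m)" using vn vv i(1) by (auto simp: thick_vertex_def split: if_splits)
    then have "{?u, v} = {n + m, v}" using i(2) by (simp add: thick_vertex_def)
    then have "?u = n + m \<or> v = n + m" by (auto simp: doubleton_eq_iff)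
    then show False using ul vn by auto
  qed
  moreover have "c (Min {?u, v}) (Max {?u, v}) = 0" if "m \<noteq> 0"
  proof -
    have "?u \<ge> n" using that by (simp add: thick_vertex_def)
    then show ?thesis using mg_zero[OF mg] by (simp add: Min_Max_2 max_def)
  qed
  ultimately show ?thesis
    by (cases "m = 0") (auto simp: Wt_def thick_vertex_def insert_commute)
qed

lemma W_wa: "Wt n c v v' b (Suc (Suc m)) {thick_vertex n v v' (Suc m) m, n + m} = b"
proof -
  have "Pth n v v' (Suc (Suc m)) {thick_vertex n v v' (Suc m) m, n + m}"
    unfolding Pth_def
    by (rule bexI[of _ "Suc m"]) (auto simp: thick_vertex_def)
  then show ?thesis by (simp add: Wt_def)
qed

lemma W_hx:
  assumes "y \<noteq> thick_vertex n v v' (Suc m) m" "y \<noteq> v"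
  shows "Wt n c v v' b (Suc (Suc m)) {n + m, y} = 0"
proof -
  have "\<not> Pth n v v' (Suc (Suc m)) {n + m, y}"
  proof
    assume "Pth n v v' (Suc (Suc m)) {n + m, y}"
    then obtain i where i: "i \<in> {1..Suc (Suc m)}"
      "{n + m, y} = {thick_vertex n v v' (Suc (Suc m)) (i - 1), thick_vertex n v v' (Suc (Suc m)) i}"
      by (auto simp: Pth_def)
    have "n + m \<in> {thick_vertex n v v' (Suc (Suc m)) (i - 1), thick_vertex n v v' (Suc (Suc m)) i}"
      using i(2) by blast
    then have "i = Suc m \<or> i = Suc (Suc m)" using vn v'n i(1)
      by (auto simp: thick_vertex_def split: if_splits)
    then show False
    proof
      assume "i = Suc m"
      then have "{n + m, y} = {thick_vertex n v v' (Suc m) m, n + m}"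
        using i(2) by (simp add: thick_vertex_def)
      then show False using assms by (auto simp: doubleton_eq_iff)
    next
      assume "i = Suc (Suc m)"
      then have "{n + m, y} = {n + m, v}"
        using i(2) by (simp add: thick_vertex_def insert_commute)
      then show False using assms by (auto simp: doubleton_eq_iff)
    qed
  qed
  moreover have "{n + m, y} \<noteq> {v, v'}" using vn v'n by (auto simp: doubleton_eq_iff)
  moreover have "c (Min {n + m, y}) (Max {n + m, y}) = 0"
    using mg_zero[OF mg] by (simp add: Min_Max_2 max_def)
  ultimately show ?thesis by (simp add: Wt_def)
qed

lemma W_last: "Wt n c v v' b (Suc m) {thick_vertex n v v' (Suc m) m, v} = b"
proof -
  have "Pth n v v' (Suc m) {thick_vertex n v v' (Suc m) m, v}"
    unfolding Pth_def
    by (rule bexI[of _ "Suc m"]) (auto simp: thick_vertex_def)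
  then show ?thesis by (simp add: Wt_def)
qed

lemma W_base: "d \<in> edges_in {0..<n} \<Longrightarrow> d \<noteq> {v', v} \<Longrightarrow> Wt n c v v' b 1 d = c (Min d) (Max d)"
  by (auto simp: Wt_def Pth_def thick_vertex_def insert_commute)

lemma path_AB:
  "Aw {0..<n + m} (Wt n c v v' b (Suc m)) {thick_vertex n v v' (Suc m) m, v}
     = b ^ m * Aw {0..<n} (\<lambda>d. c (Min d) (Max d)) {v, v'} \<and>
   Bw {0..<n + m} (Wt n c v v' b (Suc m)) {thick_vertex n v v' (Suc m) m, v}
     = b ^ m * Bw {0..<n} (\<lambda>d. c (Min d) (Max d)) {v, v'}
       + m * b ^ (m - 1) * Aw {0..<n} (\<lambda>d. c (Min d) (Max d)) {v, v'}"
proof (induction m)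
  case 0
  have e: "{thick_vertex n v v' (Suc 0) 0, v} = {v', v}" by (simp add: thick_vertex_def)
  show ?case unfolding e
    using AB_cong[of "{0..<n}" "{v', v}" "Wt n c v v' b 1" "\<lambda>d. c (Min d) (Max d)", OF W_base]
    by (simp add: e insert_commute)
next
  case (Suc m)
  let ?u = "thick_vertex n v v' (Suc m) m"
  let ?A0 = "Aw {0..<n} (\<lambda>d. c (Min d) (Max d)) {v, v'}"
  let ?B0 = "Bw {0..<n} (\<lambda>d. c (Min d) (Max d)) {v, v'}"
  have uV: "?u \<in> {0..<n + m}" using tv_less[OF vn v'n, of m m] by simp
  have zV: "v \<in> {0..<n + m}" using vn by simp
  have uz: "?u \<noteq> v" using tv_eq_v[OF vn vv, of "Suc m" m] by simp
  have xV: "n + m \<notin> {0..<n + m}" by simp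
  note sd = subdiv[OF _ uV zV uz xV W_hw W_w0 W_wa W_hx, simplified]
  have ins: "insert (n + m) {0..<n + m} = {0..<n + Suc m}" by auto
  have L: "{thick_vertex n v v' (Suc (Suc m)) (Suc m), v} = {n + m, v}"
    by (simp add: thick_vertex_def)
  have A: "Aw {0..<n + Suc m} (Wt n c v v' b (Suc (Suc m))) {n + m, v} = b * (b ^ m * ?A0)"
    using sd(1) Suc.IH ins by simp
  have B: "Bw {0..<n + Suc m} (Wt n c v v' b (Suc (Suc m))) {n + m, v}
      = b ^ m * ?A0 + b * (b ^ m * ?B0 + m * b ^ (m - 1) * ?A0)"
    using sd(2) Suc.IH ins by simp
  have bm: "b * (m * b ^ (m - 1)) = m * b ^ m" by (cases m) (auto simp: algebra_simps)
  have B': "b ^ m * ?A0 + b * (b ^ m * ?B0 + m * b ^ (m - 1) * ?A0)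
      = b ^ Suc m * ?B0 + Suc m * b ^ m * ?A0"
  proof -
    have "b ^ m * ?A0 + b * (b ^ m * ?B0 + m * b ^ (m - 1) * ?A0)
        = b ^ m * ?A0 + b ^ Suc m * ?B0 + (b * (m * b ^ (m - 1))) * ?A0"
      by (simp add: algebra_simps)
    also have "\<dots> = b ^ m * ?A0 + b ^ Suc m * ?B0 + (m * b ^ m) * ?A0" by (simp only: bm)
    also have "\<dots> = b ^ Suc m * ?B0 + Suc m * b ^ m * ?A0" by (simp add: algebra_simps)
    finally show ?thesis .
  qed
  show ?case using A B B' L by (simp add: algebra_simps)
qed

end



lemma trees_eq: "{T. is_spanning_tree N T} = trees {0..<N}"
proof -
  have e: "edges_on N = edges_in {0..<N}" by (auto simp: edges_on_def edges_in_def)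
  have r: "{(a, b). {a, b} \<in> T} = relT T" for T by (simp add: relT_def)
  show ?thesis by (auto simp: is_spanning_tree_def trees_def conn_def e r)
qed

lemma nst_tau: "num_spanning_trees N c' = tau {0..<N} (\<lambda>d. c' (Min d) (Max d))"
  by (simp add: num_spanning_trees_def tau_def trees_eq)

lemma MinMax_set: "d = {a, b :: nat} \<Longrightarrow> {Min d, Max d} = d"
  by (auto simp: Min_Max_2 min_def max_def)

theorem mainTheorem5:
  fixes n :: nat and c :: "nat \<Rightarrow> nat \<Rightarrow> nat" and p q v v' e :: nat
    and h :: int and S :: "nat \<Rightarrow> int"
  assumes "multigraph n c" and "connected_mg n c"
    and "pair_of_order n c p q h" and "is_marking n c p q h S"
    and "v < n" and "v' < n" and "c v v' = e" and "1 \<le> e"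
    and "S v' = 0" and "S v > 0"
  shows "num_spanning_trees (n + nat (S v) - 1) (thicken n c v v' e (nat (S v)))
         = nat (S v) * (e * nat (S v)) ^ (nat (S v) - 1) * num_spanning_trees n c"
proof -
  note mg = assms(1)
  define s where "s = nat (S v)"
  have s1: "s \<ge> 1" using assms(10) by (simp add: s_def)
  define m where "m = s - 1"
  have sm: "s = Suc m" using s1 by (simp add: m_def)
  define b where "b = e * s"
  have vv: "v \<noteq> v'"
  proof
    assume "v = v'"
    then have "c v v' = 0" using mg by (simp add: multigraph_def)
    then show False using assms(7,8) by simp
  qed
  let ?cw = "\<lambda>d. c (Min d) (Max d)"
  let ?A0 = "Aw {0..<n} ?cw {v, v'}"
  let ?B0 = "Bw {0..<n} ?cw {v, v'}"
  let ?W = "Wt n c v v' b (Suc m)"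
  let ?L = "{thick_vertex n v v' (Suc m) m, v}"
  have cvv: "?cw {v, v'} = e"
  proof -
    have "c v' v = c v v'" using mg by (simp add: multigraph_def)
    then show ?thesis using assms(7) by (simp add: Min_Max_2 min_def max_def)
  qed
  have G: "num_spanning_trees n c = ?A0 + e * ?B0"
    using nst_tau[of n c] tau_split[of "{0..<n}" ?cw "{v, v'}"] cvv by simp
  have thW: "thicken n c v v' e s (Min d) (Max d) = ?W d" if dE: "d \<in> edges_in {0..<n + m}" for d
  proof -
    obtain a a' where "d = {a, a'}" using dE by (auto simp: edges_in_def)
    then have md: "{Min d, Max d} = d" by (rule MinMax_set)
    show ?thesis unfolding thicken_def Wt_def Pth_def md b_def sm by simp
  qed
  have "num_spanning_trees (n + s - 1) (thicken n c v v' e s) = tau {0..<n + m} ?W"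
  proof -
    have "n + s - 1 = n + m" using sm by simp
    then have "num_spanning_trees (n + s - 1) (thicken n c v v' e s)
        = tau {0..<n + m} (\<lambda>d. thicken n c v v' e s (Min d) (Max d))" by (simp add: nst_tau)
    also have "\<dots> = tau {0..<n + m} ?W"
      unfolding tau_def by (rule sum.cong) (auto simp: trees_def thW intro!: prod.cong)
    finally show ?thesis .
  qed
  also have "\<dots> = Aw {0..<n + m} ?W ?L + ?W ?L * Bw {0..<n + m} ?W ?L"
    by (rule tau_split) simp
  also have "\<dots> = b ^ m * ?A0 + b * (b ^ m * ?B0 + m * b ^ (m - 1) * ?A0)"
    using path_AB[OF mg assms(5,6) vv, where b=b and m=m] W_last[OF mg assms(5,6) vv, of b m] by simp
  also have "\<dots> = s * b ^ m * (?A0 + e * ?B0)"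
  proof -
    have bm: "b * (m * b ^ (m - 1)) = m * b ^ m" by (cases m) (auto simp: algebra_simps)
    have "b ^ m * ?A0 + b * (b ^ m * ?B0 + m * b ^ (m - 1) * ?A0)
        = b ^ m * ?A0 + b * b ^ m * ?B0 + (b * (m * b ^ (m - 1))) * ?A0"
      by (simp add: algebra_simps)
    also have "\<dots> = b ^ m * ?A0 + b * b ^ m * ?B0 + (m * b ^ m) * ?A0" by (simp only: bm)
    also have "\<dots> = s * b ^ m * (?A0 + e * ?B0)" by (simp add: algebra_simps b_def sm)
    finally show ?thesis .
  qed
  finally show ?thesis using G by (simp add: s_def[symmetric] b_def m_def)
qed


end
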